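(* A distribution $P^0\in L\cap\Delta^{n-1}_+$ is a minimal point of $L\cap\Delta^{n-1}_+$ with respect to the (global) Markov order $\succ_{P^*}$ (i.e. there is no $P^1\in L\cap\Delta^{n-1}_+$, $P^1\neq P^0$, with $P^0\succ_{P^*}P^1$) if and only if $\bigl(P^0+\mathbf{Q}(P^0,P^* )\bigr)\cap L=\{P^0\}$.
   Context: Fix $n\ge 2$ and a positive equilibrium distribution $P^*=(p^*_i)$, $p^*_i>0$, $\sum_i p^*_i=1$. Let $\Delta^{n-1}_+=\{P\in\mathbb{R}^n: p_i>0,\ \sum_i p_i=1\}$. A Markov chain with equilibrium $P^*$ is given by rate constants $q_{ij}\ge 0$ ($i\neq j$) satisfying $\sum_{j\ne i}q_{ij}p^*_j=\bigl(\sum_{j\ne i}q_{ji}\bigr)p^*_i$ for all $i$; its Kolmogorov equation is $\frac{dp_i}{dt}=\sum_{j\ne i}(q_{ij}p_j-q_{ji}p_i)$. Markov preorder: $P^0\succ^0_{P^*}P^1$ if for some Markov chain with equilibrium $P^*$ the solution of the Kolmogorov equation with $P(0)=P^0$ satisfies $P(1)=P^1$. The (global) Markov order $\succ_{P^*}$ is the closed transitive closure of $\succ^0_{P^*}$. For $i\neq j$ let $\gamma^{ji}$ be the vector with $\gamma^{ji}_j=-1$, $\gamma^{ji}_i=1$, other coordinates $0$; ${\rm cone}$ denotes non-negative linear combinations; ${\rm sign}$ is the three-valued sign function; $\mathbf{Q}(P,P^* )={\rm cone}\{\gamma^{ji}\,{\rm sign}(\tfrac{p_j}{p^*_j}-\tfrac{p_i}{p^*_i})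 : 1\le j<i\le n\}$. The condition manifold is $L=\{P:\ \sum_j m_{rj}p_j=M_r,\ r=0,\dots,k\}$ with $m_{0j}=1$, $M_0=1$, and $L\cap\Delta^{n-1}_+\ne\emptyset$. *)

theory Defs
  imports "HOL-Analysis.Analysis"
begin

text \<open>Distributions are vectors in real^'n, the index type 'n being finite and
linearly ordered (the order is only used for the index condition j < i in the
definition of the cone Q).\<close>

definition pos_simplex :: "(real^'n) set" where
  "pos_simplex = {p. (\<forall>i. p$i > 0) \<and> (\<Sum>i\<in>UNIV. p$i) = 1}"

definition markov_chain :: "real^'n \<Rightarrow> ('n \<Rightarrow> 'n \<Rightarrow> real) \<Rightarrow> bool" where
  "markov_chain pstar q \<longleftrightarrow>
     (\<forall>i j. i \<noteq> j \<longrightarrow> q i j \<ge> 0) \<and>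
     (\<forall>i. (\<Sum>j\<in>-{i}. q i j * pstar$j) = (\<Sum>j\<in>-{i}. q j i) * pstar$i)"

definition kolmogorov_rhs :: "('n \<Rightarrow> 'n \<Rightarrow> real) \<Rightarrow> real^'n \<Rightarrow> real^'n" where
  "kolmogorov_rhs q p = (\<chi> i. \<Sum>j\<in>-{i}. q i j * p$j - q j i * p$i)"

text \<open>Markov preorder: P0 is carried to P1 in time 1 by some Markov chain with
equilibrium pstar (the linear Kolmogorov equation has a unique solution, so
existence of a solution on [0,1] with P(1) = P1 is the same as the solution
satisfying P(1) = P1).\<close>
definition markov_preorder :: "real^'n \<Rightarrow> real^'n \<Rightarrow> real^'n \<Rightarrow> bool" where
  "markov_preorder pstar p0 p1 \<longleftrightarrow>
     (\<exists>q P. markov_chain pstar q \<and> P 0 = p0 \<and> P 1 = p1 \<and>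
        (\<forall>t\<in>{0..1}. (P has_vector_derivative kolmogorov_rhs q (P t)) (at t within {0..1})))"

definition markov_order :: "real^'n \<Rightarrow> ((real^'n) \<times> (real^'n)) set" where
  "markov_order pstar =
     \<Inter>{R. R \<subseteq> pos_simplex \<times> pos_simplex \<and>
          {(a,b). a \<in> pos_simplex \<and> b \<in> pos_simplex \<and> markov_preorder pstar a b} \<subseteq> R \<and>
          trans R \<and> closedin (top_of_set (pos_simplex \<times> pos_simplex)) R}"

definition gamma_vec :: "'n \<Rightarrow> 'n \<Rightarrow> real^'n" where
  "gamma_vec j i = (\<chi> k. if k = j then -1 else if k = i then 1 else 0)"

definition Qcone :: "real^('n::{finite,linorder}) \<Rightarrow> real^('n::{finite,linorder}) \<Rightarrow> (real^('n::{finite,linorder})) set" where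
  "Qcone p pstar =
     {x. \<exists>c. (\<forall>j i. c j i \<ge> 0) \<and>
        x = (\<Sum>(j,i)\<in>{(j,i). j < i}.
               c j i *\<^sub>R (sgn (p$j / pstar$j - p$i / pstar$i) *\<^sub>R gamma_vec j i))}"

definition cond_manifold :: "nat \<Rightarrow> (nat \<Rightarrow> real^'n) \<Rightarrow> (nat \<Rightarrow> real) \<Rightarrow> (real^'n) set" where
  "cond_manifold k m M = {p. \<forall>r\<le>k. (\<Sum>j\<in>UNIV. m r $ j * p $ j) = M r}"

end

theory Submission
  imports Defs
begin


lemma layer_cake_aux:
  fixes v x :: "'n::finite \<Rightarrow> real"
  assumes sv: "sum v UNIV = 0"
  and up: "\<And>U. (\<forall>i j. i \<in> U \<longrightarrow> x i < x j \<longrightarrow> j \<in> U) \<Longrightarrow> sum v U \<le> 0"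
  shows "\<forall>w. card (range w) \<le> N \<longrightarrow> (\<forall>i j. x i < x j \<longrightarrow> w i \<le> w j) \<longrightarrow> (\<Sum>i\<in>UNIV. w i * v i) \<le> 0"
proof (induction N)
  case 0
  then show ?case by simp
next
  case (Suc N)
  show ?case
  proof (intro allI impI)
    fix w :: "'n \<Rightarrow> real"
    assume c: "card (range w) \<le> Suc N" and mw: "\<forall>i j. x i < x j \<longrightarrow> w i \<le> w j"
    show "(\<Sum>i\<in>UNIV. w i * v i) \<le> 0"
    proof (cases "card (range w) \<le> 1")
      case True
      define i0 :: 'n where "i0 = undefined"
      have ne: "range w \<noteq> {}" by simp
      have "range w = {w i0}"
        using True ne card_le_Suc0_iff_eq[of "range w"] by auto
      then have "\<And>i. w i = w i0" by auto
      then have "(\<Sum>i\<in>UNIV. w i * v i) = w i0 * sum v UNIV"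
      proof -
        assume h: "\<And>i. w i = w i0"
        have "(\<lambda>i. w i * v i) = (\<lambda>i. w i0 * v i)" by (rule ext) (subst h, rule refl)
        then show ?thesis by (metis sum_distrib_left)
      qed
      then show ?thesis using sv by simp
    next
      case False
      define m where "m = Min (range w)"
      define R' where "R' = range w - {m}"
      have fin: "finite (range w)" by simp
      have mr: "m \<in> range w" unfolding m_def using fin by (intro Min_in) auto
      have mle: "\<And>i. m \<le> w i" unfolding m_def using fin by auto
      have cR: "card R' = card (range w) - 1" unfolding R'_def using mr fin by (simp add: card_Diff_singleton)
      have R'ne: "R' \<noteq> {}" using False cR by (metis card.empty diff_is_0_eq nat_le_linear not_less_eq_eq)
      define m2 where "m2 = Min R'"
      have finR: "finite R'" unfolding R'_def using fin by simp
      have m2R: "m2 \<in> R'" unfolding m2_def using finR R'ne by (intro Min_in) auto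
      have m2le: "\<And>i. w i \<noteq> m \<Longrightarrow> m2 \<le> w i" unfolding m2_def R'_def using finR by auto
      have mm2: "m < m2" using m2R mle unfolding R'_def by (metis DiffE image_iff insertI1 order_le_less)
      define w' where "w' i = max (w i) m2" for i
      have rw': "range w' = R'"
      proof
        show "range w' \<subseteq> R'"
        proof
          fix y assume "y \<in> range w'"
          then obtain i where y: "y = w' i" by auto
          show "y \<in> R'"
          proof (cases "w i = m")
            case True then show ?thesis using y m2R mm2 unfolding w'_def by (simp add: max_def)
          next
            case False then show ?thesis using y m2le[OF False] unfolding w'_def R'_def by (simp add: max_def)
          qed
        qed
        show "R' \<subseteq> range w'"
        proof
          fix y assume "y \<in> R'"
          then obtain i where "y = w i" "w i \<noteq> m" unfolding R'_def by auto
          then have "y = w' i" using m2le[of i] unfolding w'_def by (simp add: max_def)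
          then show "y \<in> range w'" by auto
        qed
      qed
      have cw': "card (range w') \<le> N" using rw' cR c by simp
      have mw': "\<forall>i j. x i < x j \<longrightarrow> w' i \<le> w' j" using mw unfolding w'_def by (meson max.mono order_refl)
      have IH: "(\<Sum>i\<in>UNIV. w' i * v i) \<le> 0" using Suc.IH cw' mw' by blast
      define U where "U = {i. m < w i}"
      have upU: "sum v U \<le> 0"
        using mw by (intro up) (auto simp: U_def intro: less_le_trans)
      have diff: "w i - w' i = (m - m2) * (if i \<in> U then 0 else 1)" for i
        using mle[of i] m2le[of i] mm2 unfolding w'_def U_def by (auto simp: max_def)
      have "(\<Sum>i\<in>UNIV. w i * v i) = (\<Sum>i\<in>UNIV. w' i * v i) + (\<Sum>i\<in>UNIV. (w i - w' i) * v i)"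
        by (simp add: sum.distrib[symmetric] algebra_simps)
      also have "(\<Sum>i\<in>UNIV. (w i - w' i) * v i) = (m - m2) * (\<Sum>i\<in>UNIV. (if i \<in> U then 0 else v i))"
        unfolding diff sum_distrib_left by (rule sum.cong) auto
      also have "(\<Sum>i\<in>UNIV. (if i \<in> U then 0 else v i)) = sum v UNIV - sum v U"
      proof -
        have "sum v UNIV = (\<Sum>i\<in>UNIV. (if i \<in> U then v i else 0)) + (\<Sum>i\<in>UNIV. (if i \<in> U then 0 else v i))"
          by (simp add: sum.distrib[symmetric]) (rule sum.cong, auto)
        moreover have "(\<Sum>i\<in>UNIV. (if i \<in> U then v i else 0)) = sum v U"
          by (simp add: sum.If_cases)
        ultimately show ?thesis by simp
      qed
      finally have eq: "(\<Sum>i\<in>UNIV. w i * v i) = (\<Sum>i\<in>UNIV. w' i * v i) + (m - m2) * (sum v UNIV - sum v U)" .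
      have "(m - m2) * (sum v UNIV - sum v U) \<le> 0"
        using sv upU mm2 by (simp add: mult_nonpos_nonpos)
      then show ?thesis using eq IH by linarith
    qed
  qed
qed

lemma layer_cake:
  fixes v x w :: "'n::finite \<Rightarrow> real"
  assumes "sum v UNIV = 0"
  and "\<And>U. (\<forall>i j. i \<in> U \<longrightarrow> x i < x j \<longrightarrow> j \<in> U) \<Longrightarrow> sum v U \<le> 0"
  and "\<And>i j. x i < x j \<Longrightarrow> w i \<le> w j"
  shows "(\<Sum>i\<in>UNIV. w i * v i) \<le> 0"
  using layer_cake_aux[OF assms(1,2), where N="card (range w)"] assms(3) by blast



lemma Qcone_convex_cone: "convex_cone (Qcone p pstar)"
  unfolding convex_cone_iff
proof (intro conjI ballI allI impI)
  show "0 \<in> Qcone p pstar" unfolding Qcone_def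
    by (rule CollectI, rule exI[of _ "\<lambda>_ _. 0"]) simp
next
  fix x y assume "x \<in> Qcone p pstar" "y \<in> Qcone p pstar"
  then obtain c d where c: "\<forall>j i. c j i \<ge> 0" "x = (\<Sum>(j,i)\<in>{(j,i). j < i}.
               c j i *\<^sub>R (sgn (p$j / pstar$j - p$i / pstar$i) *\<^sub>R gamma_vec j i))"
    and d: "\<forall>j i. d j i \<ge> 0" "y = (\<Sum>(j,i)\<in>{(j,i). j < i}.
               d j i *\<^sub>R (sgn (p$j / pstar$j - p$i / pstar$i) *\<^sub>R gamma_vec j i))"
    unfolding Qcone_def by blast
  show "x + y \<in> Qcone p pstar" unfolding Qcone_def
    apply (rule CollectI, rule exI[of _ "\<lambda>j i. c j i + d j i"])
    apply (intro conjI)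
    using c d apply (simp add: add_nonneg_nonneg)
    unfolding c(2) d(2) sum.distrib[symmetric]
    by (rule sum.cong) (auto simp: algebra_simps)
next
  fix x and a :: real assume "x \<in> Qcone p pstar" "0 \<le> a"
  then obtain c where c: "\<forall>j i. c j i \<ge> 0" "x = (\<Sum>(j,i)\<in>{(j,i). j < i}.
               c j i *\<^sub>R (sgn (p$j / pstar$j - p$i / pstar$i) *\<^sub>R gamma_vec j i))"
    unfolding Qcone_def by blast
  show "a *\<^sub>R x \<in> Qcone p pstar" unfolding Qcone_def
    apply (rule CollectI, rule exI[of _ "\<lambda>j i. a * c j i"])
    using c \<open>0 \<le> a\<close> by (auto simp: scaleR_sum_right case_prod_beta mult.assoc)
qed

lemma gen_in_Qcone:
  assumes "j < i"
  shows "sgn (p$j / pstar$j - p$i / pstar$i) *\<^sub>R gamma_vec j i \<in> Qcone p pstar"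
proof -
  let ?g = "\<lambda>j i. sgn (p$j / pstar$j - p$i / pstar$i) *\<^sub>R gamma_vec j i"
  let ?c = "\<lambda>a b. if (a,b) = (j,i) then 1 else (0::real)"
  have "(\<Sum>(a,b)\<in>{(a,b). a < b}. ?c a b *\<^sub>R ?g a b) = (\<Sum>z\<in>{(a,b). a < b}. if z = (j,i) then ?g j i else 0)"
    by (rule sum.cong[OF refl]) (clarsimp split: if_splits)
  also have "\<dots> = ?g j i" using assms by (simp add: sum.delta')
  finally have eq0: "(\<Sum>(a,b)\<in>{(a,b). a < b}. ?c a b *\<^sub>R ?g a b) = ?g j i" .
  note eq = eq0[symmetric]
  show ?thesis unfolding Qcone_def mem_Collect_eq
    apply (rule exI[of _ ?c], rule conjI)
     apply simp
    by (rule eq)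
qed

lemma inner_gamma:
  fixes a :: "real^'n"
  assumes "j \<noteq> i"
  shows "inner a (gamma_vec j i) = a$i - a$j"
proof -
  have "inner a (gamma_vec j i) = (\<Sum>k\<in>UNIV. a$k * (if k = j then -1 else if k = i then 1 else 0))"
    unfolding inner_vec_def gamma_vec_def by simp
  also have "\<dots> = (\<Sum>k\<in>UNIV. (if k = i then a$i else 0) - (if k = j then a$j else 0))"
    by (rule sum.cong) (use assms in auto)
  also have "\<dots> = a$i - a$j" by (simp add: sum_subtractf)
  finally show ?thesis .
qed

lemma farkas_Qcone:
  fixes p pstar v :: "real^('n::{finite,linorder})"
  assumes sv: "(\<Sum>k\<in>UNIV. v$k) = 0"
  and up: "\<And>U. (\<forall>i j. i \<in> U \<longrightarrow> p$i / pstar$i < p$j / pstar$j \<longrightarrow> j \<in> U) \<Longrightarrow> (\<Sum>k\<in>U. v$k) \<le> 0"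
  shows "v \<in> Qcone p pstar"
proof -
  define x where "x i = p$i / pstar$i" for i
  define gens where "gens = (\<lambda>(j,i). sgn (x j - x i) *\<^sub>R gamma_vec j i) ` {(j,i). j < i}"
  define K where "K = convex_cone hull gens"
  have fg: "finite gens" unfolding gens_def by simp
  have cK: "closed K" unfolding K_def using fg by (rule closed_convex_cone_hull)
  have ccK: "convex_cone K" unfolding K_def by (rule convex_cone_convex_cone_hull)
  have KQ: "K \<subseteq> Qcone p pstar" unfolding K_def
  proof (rule hull_minimal)
    show "gens \<subseteq> Qcone p pstar" unfolding gens_def x_def using gen_in_Qcone by auto
  qed (rule Qcone_convex_cone)
  have "v \<in> K"
  proof (rule ccontr)
    assume "v \<notin> K"
    then obtain a b where ab: "inner a v < b" "\<forall>y\<in>K. inner a y > b"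
      using separating_hyperplane_closed_point[OF _ cK] ccK unfolding convex_cone_def by blast
    have b0: "b < 0" using ab(2) ccK by (metis convex_cone_iff inner_zero_right)
    have ag: "inner a g \<ge> 0" if "g \<in> gens" for g
    proof (rule ccontr)
      assume "\<not> inner a g \<ge> 0"
      then have neg: "inner a g < 0" by simp
      define l where "l = b / inner a g"
      have l0: "l \<ge> 0" unfolding l_def using neg b0 by (simp add: divide_nonpos_neg)
      have "l *\<^sub>R g \<in> K" using that ccK l0 unfolding K_def by (metis K_def convex_cone_scaleR hull_inc)
      then have "inner a (l *\<^sub>R g) > b" using ab by blast
      moreover have "inner a (l *\<^sub>R g) = b" unfolding l_def using neg by simp
      ultimately show False by simp
    qed
    have mono: "- (a$i) \<le> - (a$j)" if "x i < x j" for i j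
    proof -
      have ij: "i \<noteq> j" using that by auto
      show ?thesis
      proof (cases "j < i")
        case True
        then have "gamma_vec j i \<in> gens" unfolding gens_def using that
          by (auto intro!: image_eqI[of _ _ "(j,i)"])
        then show ?thesis using ag inner_gamma[of j i a] ij by fastforce
      next
        case False
        then have "i < j" using ij by auto
        then have "(- 1::real) *\<^sub>R gamma_vec i j \<in> gens" unfolding gens_def using that
          by (auto intro!: image_eqI[of _ _ "(i,j)"])
        then have "inner a ((- 1::real) *\<^sub>R gamma_vec i j) \<ge> 0" using ag by blast
        then show ?thesis using inner_gamma[of i j a] ij by simp
      qed
    qed
    have "(\<Sum>k\<in>UNIV. (- (a$k)) * v$k) \<le> 0"
      by (rule layer_cake[of "\<lambda>k. v$k" x]) (use sv up mono in \<open>auto simp: x_def\<close>)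
    then have "inner a v \<ge> 0" unfolding inner_vec_def by (simp add: sum_negf)
    then show False using ab(1) b0 by simp
  qed
  then show ?thesis using KQ by blast
qed



definition sp :: "real \<Rightarrow> real \<Rightarrow> real \<Rightarrow> real" where
  "sp \<tau> s y = s * ln (1 + exp ((y - \<tau>) / s))"
definition spd :: "real \<Rightarrow> real \<Rightarrow> real \<Rightarrow> real" where
  "spd \<tau> s y = exp ((y - \<tau>) / s) / (1 + exp ((y - \<tau>) / s))"

lemma aux_frac2: "(s::real) > 0 \<Longrightarrow> 1 + E > 0 \<Longrightarrow> s * (1 / (1 + E) * (E * (1 / s))) = E / (1 + E)"
  by simp

lemma sp_deriv:
  assumes "s > 0"
  shows "(sp \<tau> s has_real_derivative spd \<tau> s y) (at y)"
proof -
  have "((\<lambda>y. s * ln (1 + exp ((y - \<tau>) / s))) has_real_derivative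
        s * (1 / (1 + exp ((y - \<tau>) / s)) * (exp ((y - \<tau>) / s) * (1 / s)))) (at y)"
    using assms by (intro derivative_eq_intros DERIV_ln_divide) (auto intro: add_pos_pos)
  moreover have "s * (1 / (1 + exp ((y - \<tau>) / s)) * (exp ((y - \<tau>) / s) * (1 / s))) = spd \<tau> s y"
    unfolding spd_def using assms by (intro aux_frac2) (auto intro: add_pos_pos)
  ultimately show ?thesis unfolding sp_def by metis
qed

lemma aux_frac: "(E::real) > 0 \<Longrightarrow> E / (1 + E) = 1 - 1 / (1 + E)"
  by (simp add: field_simps)

lemma spd_mono:
  assumes "s > 0" "y \<le> z"
  shows "spd \<tau> s y \<le> spd \<tau> s z"
proof -
  have e: "exp ((y - \<tau>) / s) \<le> exp ((z - \<tau>) / s)"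
    using assms by (simp add: divide_right_mono)
  have "spd \<tau> s y = 1 - 1 / (1 + exp ((y - \<tau>) / s))"
    unfolding spd_def by (rule aux_frac) simp
  moreover have "spd \<tau> s z = 1 - 1 / (1 + exp ((z - \<tau>) / s))"
    unfolding spd_def by (rule aux_frac) simp
  moreover have "1 / (1 + exp ((z - \<tau>) / s)) \<le> 1 / (1 + exp ((y - \<tau>) / s))"
    using e add_pos_pos[OF zero_less_one exp_gt_zero] by (intro divide_left_mono mult_pos_pos) auto
  ultimately show ?thesis by simp
qed

lemma sp_tangent:
  assumes "s > 0"
  shows "sp \<tau> s z - sp \<tau> s y \<ge> spd \<tau> s y * (z - y)"
proof -
  have cv: "convex_on UNIV (sp \<tau> s)"
    by (rule convex_on_realI[where f'="spd \<tau> s"]) (use assms sp_deriv spd_mono in auto)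
  show ?thesis
    by (rule convex_on_imp_above_tangent[OF cv]) (use sp_deriv[OF assms] in auto)
qed

lemma sp_bounds:
  assumes "s > 0"
  shows "max (y - \<tau>) 0 \<le> sp \<tau> s y" "sp \<tau> s y \<le> max (y - \<tau>) 0 + s * ln 2"
proof -
  define u where "u = (y - \<tau>) / s"
  have yu: "y - \<tau> = s * u" unfolding u_def using assms by simp
  have l1: "ln (1 + exp u) \<ge> u"
  proof -
    have "ln (1 + exp u) \<ge> ln (exp u)" by (subst ln_le_cancel_iff) (auto intro: add_pos_pos)
    then show ?thesis by simp
  qed
  have l2: "ln (1 + exp u) \<ge> 0" by simp
  have l3: "ln (1 + exp u) \<le> max u 0 + ln 2"
  proof (cases "u \<le> 0")
    case True
    then have "1 + exp u \<le> 2" by simp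
    then have "ln (1 + exp u) \<le> ln 2" by (subst ln_le_cancel_iff) (auto intro: add_pos_pos)
    then show ?thesis using True by simp
  next
    case False
    then have "1 + exp u \<le> 2 * exp u" using one_le_exp_iff[of u] by simp
    then have "ln (1 + exp u) \<le> ln (2 * exp u)" by (subst ln_le_cancel_iff) (auto intro: add_pos_pos)
    also have "\<dots> = ln 2 + u" by (simp add: ln_mult)
    finally show ?thesis using False by simp
  qed
  have sp: "sp \<tau> s y = s * ln (1 + exp u)" unfolding sp_def u_def by simp
  show "max (y - \<tau>) 0 \<le> sp \<tau> s y"
    unfolding sp yu using l1 l2 assms by (auto simp: mult_left_mono)
  have "s * ln (1 + exp u) \<le> s * (max u 0 + ln 2)" using l3 assms by (simp add: mult_left_mono)
  also have "\<dots> = max (s * u) 0 + s * ln 2" using assms by (auto simp: distrib_left max_def mult_le_0_iff)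
  finally show "sp \<tau> s y \<le> max (y - \<tau>) 0 + s * ln 2" unfolding sp yu .
qed

lemma sum_swap_offdiag:
  fixes f :: "'n::finite \<Rightarrow> 'n \<Rightarrow> real"
  shows "(\<Sum>i\<in>UNIV. \<Sum>j\<in>-{i}. f i j) = (\<Sum>i\<in>UNIV. \<Sum>j\<in>-{i}. f j i)"
proof -
  have r: "(\<Sum>j\<in>-{i}. g j) = (\<Sum>j\<in>UNIV. g j) - g i" for g :: "'n \<Rightarrow> real" and i
    using sum.remove[of UNIV i g] by (simp add: Compl_eq_Diff_UNIV)
  show ?thesis unfolding r sum_subtractf using sum.swap[of f UNIV UNIV] by simp
qed

lemma kolmo_neg:
  fixes pstar p :: "real^'n" and \<phi> \<phi>' :: "real \<Rightarrow> real"
  assumes tangent: "\<And>y z. \<phi> z - \<phi> y \<ge> \<phi>' y * (z - y)"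
    and mc: "markov_chain pstar q" and pos: "\<forall>i. pstar$i > 0"
  shows "(\<Sum>i\<in>UNIV. \<phi>' (p$i / pstar$i) * kolmogorov_rhs q p $ i) \<le> 0"
proof -
  define x where "x i = p$i / pstar$i" for i
  define \<psi> where "\<psi> y = y * \<phi>' y - \<phi> y" for y
  have px: "p$i = pstar$i * x i" for i unfolding x_def using pos[rule_format, of i] by simp
  have qnn: "\<And>i j. i \<noteq> j \<Longrightarrow> q i j \<ge> 0" and bal: "\<And>i. (\<Sum>j\<in>-{i}. q i j * pstar$j) = (\<Sum>j\<in>-{i}. q j i) * pstar$i"
    using mc unfolding markov_chain_def by auto
  have "(\<Sum>i\<in>UNIV. \<phi>' (x i) * kolmogorov_rhs q p $ i)
      = (\<Sum>i\<in>UNIV. \<Sum>j\<in>-{i}. q i j * p$j * \<phi>' (x i)) - (\<Sum>i\<in>UNIV. \<Sum>j\<in>-{i}. q j i * p$i * \<phi>' (x i))"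
    unfolding kolmogorov_rhs_def by (simp add: sum_distrib_left sum_subtractf[symmetric] algebra_simps)
  also have "(\<Sum>i\<in>UNIV. \<Sum>j\<in>-{i}. q j i * p$i * \<phi>' (x i)) = (\<Sum>i\<in>UNIV. \<Sum>j\<in>-{i}. q i j * p$j * \<phi>' (x j))"
    by (rule sum_swap_offdiag)
  also have "(\<Sum>i\<in>UNIV. \<Sum>j\<in>-{i}. q i j * p$j * \<phi>' (x i)) - (\<Sum>i\<in>UNIV. \<Sum>j\<in>-{i}. q i j * p$j * \<phi>' (x j))
      = (\<Sum>i\<in>UNIV. \<Sum>j\<in>-{i}. q i j * pstar$j * (x j * (\<phi>' (x i) - \<phi>' (x j))))"
    by (simp add: sum_subtractf[symmetric] px algebra_simps)
  also have "\<dots> \<le> (\<Sum>i\<in>UNIV. \<Sum>j\<in>-{i}. q i j * pstar$j * (\<psi> (x i) - \<psi> (x j)))"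
  proof (intro sum_mono mult_left_mono)
    fix i j :: 'n assume "j \<in> -{i}"
    then show "0 \<le> q i j * pstar$j" using qnn[of i j] pos by (auto intro: mult_nonneg_nonneg less_imp_le)
    show "x j * (\<phi>' (x i) - \<phi>' (x j)) \<le> \<psi> (x i) - \<psi> (x j)"
      using tangent[of "x i" "x j"] unfolding \<psi>_def by (simp add: algebra_simps)
  qed
  also have "\<dots> = (\<Sum>i\<in>UNIV. \<Sum>j\<in>-{i}. q i j * pstar$j * \<psi> (x i)) - (\<Sum>i\<in>UNIV. \<Sum>j\<in>-{i}. q i j * pstar$j * \<psi> (x j))"
    by (simp add: sum_subtractf[symmetric] algebra_simps)
  also have "(\<Sum>i\<in>UNIV. \<Sum>j\<in>-{i}. q i j * pstar$j * \<psi> (x i)) = (\<Sum>i\<in>UNIV. \<Sum>j\<in>-{i}. q j i * pstar$i * \<psi> (x i))"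
  proof (rule sum.cong[OF refl])
    fix i
    have "(\<Sum>j\<in>-{i}. q i j * pstar$j * \<psi> (x i)) = (\<Sum>j\<in>-{i}. q i j * pstar$j) * \<psi> (x i)"
      by (simp add: sum_distrib_right)
    also have "\<dots> = (\<Sum>j\<in>-{i}. q j i) * pstar$i * \<psi> (x i)" by (simp add: bal)
    also have "\<dots> = (\<Sum>j\<in>-{i}. q j i * pstar$i * \<psi> (x i))" by (simp add: sum_distrib_right)
    finally show "(\<Sum>j\<in>-{i}. q i j * pstar$j * \<psi> (x i)) = (\<Sum>j\<in>-{i}. q j i * pstar$i * \<psi> (x i))" .
  qed
  also have "(\<Sum>i\<in>UNIV. \<Sum>j\<in>-{i}. q i j * pstar$j * \<psi> (x j)) = (\<Sum>i\<in>UNIV. \<Sum>j\<in>-{i}. q j i * pstar$i * \<psi> (x i))"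
    by (rule sum_swap_offdiag)
  finally show ?thesis unfolding x_def by simp
qed

definition Hf :: "real^'n \<Rightarrow> real \<Rightarrow> real \<Rightarrow> real^'n \<Rightarrow> real" where
  "Hf pstar \<tau> s p = (\<Sum>i\<in>UNIV. pstar$i * sp \<tau> s (p$i / pstar$i))"

lemma preorder_Hmono:
  assumes mc: "markov_chain pstar q" and pos: "\<forall>i. pstar$i > 0" and s: "s > 0"
    and der: "\<forall>t\<in>{0..1}. (P has_vector_derivative kolmogorov_rhs q (P t)) (at t within {0..1})"
  shows "Hf pstar \<tau> s (P 1) \<le> Hf pstar \<tau> s (P 0)"
proof -
  define h where "h t = Hf pstar \<tau> s (P t)" for t
  define D where "D t = (\<Sum>i\<in>UNIV. pstar$i * (spd \<tau> s (P t $ i / pstar$i) * (kolmogorov_rhs q (P t) $ i / pstar$i)))" for t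
  have hd: "(h has_real_derivative D t) (at t within {0..1})" if "t \<in> {0..1}" for t
  proof -
    have comp: "((\<lambda>t. P t $ i) has_real_derivative kolmogorov_rhs q (P t) $ i) (at t within {0..1})" for i
      unfolding has_real_derivative_iff_has_vector_derivative
      using bounded_linear.has_vector_derivative[OF bounded_linear_vec_nth der[rule_format, OF that]] .
    show ?thesis unfolding h_def Hf_def D_def
      apply (intro DERIV_sum DERIV_cmult)
      apply (rule DERIV_chain2[where f="sp \<tau> s", OF sp_deriv[OF s]])
      by (intro DERIV_cdivide comp)
  qed
  have Dle: "D t \<le> 0" for t
  proof -
    have "D t = (\<Sum>i\<in>UNIV. spd \<tau> s (P t $ i / pstar$i) * kolmogorov_rhs q (P t) $ i)"
      unfolding D_def using pos by (intro sum.cong) (auto simp: field_simps less_imp_neq[symmetric])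
    also have "\<dots> \<le> 0" by (rule kolmo_neg[OF sp_tangent[OF s] mc pos])
    finally show ?thesis .
  qed
  obtain \<xi> where "\<xi> \<in> {0..1}" "h 1 - h 0 = D \<xi> * (1 - 0)"
    using mvt_very_simple[of 0 1 h "\<lambda>t. (\<lambda>x. D t * x)"] hd
    unfolding has_field_derivative_def by auto
  then show ?thesis using Dle[of \<xi>] unfolding h_def by simp
qed



lemma onepexp_ne: "1 + exp (y::real) \<noteq> 0"
  by (smt (verit) exp_gt_zero)

definition Fpos :: "real^'n \<Rightarrow> real \<Rightarrow> real^'n \<Rightarrow> real" where
  "Fpos pstar \<tau> p = (\<Sum>i\<in>UNIV. max (p$i - \<tau> * pstar$i) 0)"

lemma Hf_bounds:
  assumes pos: "\<forall>i. pstar$i > 0" and s: "s > 0" and sum1: "(\<Sum>i\<in>UNIV. pstar$i) = 1"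
  shows "Fpos pstar \<tau> p \<le> Hf pstar \<tau> s p" "Hf pstar \<tau> s p \<le> Fpos pstar \<tau> p + s * ln 2"
proof -
  have e: "max (p$i - \<tau> * pstar$i) 0 = pstar$i * max (p$i / pstar$i - \<tau>) 0" for i
  proof -
    have "p$i - \<tau> * pstar$i = pstar$i * (p$i / pstar$i - \<tau>)" using pos[rule_format, of i] by (simp add: field_simps)
    then show ?thesis using pos[rule_format, of i] by (simp add: max_def mult_le_0_iff)
  qed
  show "Fpos pstar \<tau> p \<le> Hf pstar \<tau> s p" unfolding Fpos_def Hf_def e
    using sp_bounds(1)[OF s] pos by (intro sum_mono mult_left_mono) (auto intro: less_imp_le)
  have "Hf pstar \<tau> s p \<le> (\<Sum>i\<in>UNIV. pstar$i * (max (p$i / pstar$i - \<tau>) 0 + s * ln 2))"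
    unfolding Hf_def using sp_bounds(2)[OF s] pos by (intro sum_mono mult_left_mono) (auto intro: less_imp_le)
  also have "\<dots> = Fpos pstar \<tau> p + s * ln 2 * (\<Sum>i\<in>UNIV. pstar$i)"
    unfolding Fpos_def e by (simp add: distrib_left sum.distrib sum_distrib_right mult.commute)
  finally show "Hf pstar \<tau> s p \<le> Fpos pstar \<tau> p + s * ln 2" using sum1 by simp
qed

lemma order_imp_Fpos:
  assumes ps: "pstar \<in> pos_simplex" and ab: "(a,b) \<in> markov_order pstar"
  shows "a \<in> pos_simplex" "b \<in> pos_simplex" "\<And>\<tau>. Fpos pstar \<tau> b \<le> Fpos pstar \<tau> a"
proof -
  have pos: "\<forall>i. pstar$i > 0" and sum1: "(\<Sum>i\<in>UNIV. pstar$i) = 1" using ps unfolding pos_simplex_def by auto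
  define R where "R = {(a,b). a \<in> pos_simplex \<and> b \<in> pos_simplex \<and> (\<forall>\<tau> s. s > 0 \<longrightarrow> Hf pstar \<tau> s b \<le> Hf pstar \<tau> s a)}"
  define T where "T = (\<Inter>\<tau>. \<Inter>s\<in>{0<..}. {z :: (real^'a) \<times> (real^'a). Hf pstar \<tau> s (snd z) \<le> Hf pstar \<tau> s (fst z)})"
  have cT: "closed T" unfolding T_def
  proof (intro closed_INT ballI allI closed_Collect_le)
    fix \<tau> s :: real assume s0: "s \<in> {0<..}"
    have c: "continuous_on UNIV (\<lambda>p :: real^'a. Hf pstar \<tau> s p)"
      unfolding Hf_def sp_def
      by (intro continuous_intros) (use s0 onepexp_ne in \<open>auto simp: less_imp_neq[OF pos[rule_format], symmetric]\<close>)
    show "continuous_on UNIV (\<lambda>z :: (real^'a) \<times> (real^'a). Hf pstar \<tau> s (snd z))"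
      by (rule continuous_on_compose2[OF c]) (auto intro: continuous_intros)
    show "continuous_on UNIV (\<lambda>z :: (real^'a) \<times> (real^'a). Hf pstar \<tau> s (fst z))"
      by (rule continuous_on_compose2[OF c]) (auto intro: continuous_intros)
  qed
  have RT: "R = (pos_simplex \<times> pos_simplex) \<inter> T" unfolding R_def T_def by auto
  have "R \<in> {R. R \<subseteq> pos_simplex \<times> pos_simplex \<and>
          {(a,b). a \<in> pos_simplex \<and> b \<in> pos_simplex \<and> markov_preorder pstar a b} \<subseteq> R \<and>
          trans R \<and> closedin (top_of_set (pos_simplex \<times> pos_simplex)) R}"
  proof (intro CollectI conjI)
    show "R \<subseteq> pos_simplex \<times> pos_simplex" unfolding R_def by auto
    show "{(a,b). a \<in> pos_simplex \<and> b \<in> pos_simplex \<and> markov_preorder pstar a b} \<subseteq> R"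
    proof clarify
      fix a b assume h: "a \<in> pos_simplex" "b \<in> pos_simplex" "markov_preorder pstar a b"
      then obtain q P where qP: "markov_chain pstar q" "P 0 = a" "P 1 = b"
        "\<forall>t\<in>{0..1}. (P has_vector_derivative kolmogorov_rhs q (P t)) (at t within {0..1})"
        unfolding markov_preorder_def by blast
      show "(a,b) \<in> R" unfolding R_def using h preorder_Hmono[OF qP(1) pos _ qP(4)] qP(2,3) by auto
    qed
    show "trans R" unfolding R_def trans_def by (auto intro: order_trans) (meson order_trans)
    show "closedin (top_of_set (pos_simplex \<times> pos_simplex)) R"
      unfolding closedin_closed using RT cT by blast
  qed
  then have "markov_order pstar \<subseteq> R" unfolding markov_order_def by (rule Inter_lower)
  then have abR: "(a,b) \<in> R" using ab by blast
  then show "a \<in> pos_simplex" "b \<in> pos_simplex" unfolding R_def by auto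
  fix \<tau>
  show "Fpos pstar \<tau> b \<le> Fpos pstar \<tau> a"
  proof (rule field_le_epsilon)
    fix e :: real assume e: "e > 0"
    define s where "s = e / ln 2"
    have s: "s > 0" unfolding s_def using e by simp
    have "Fpos pstar \<tau> b \<le> Hf pstar \<tau> s b" using Hf_bounds(1)[OF pos s sum1] .
    also have "\<dots> \<le> Hf pstar \<tau> s a" using abR s unfolding R_def by auto
    also have "\<dots> \<le> Fpos pstar \<tau> a + s * ln 2" using Hf_bounds(2)[OF pos s sum1] .
    also have "s * ln 2 = e" unfolding s_def by simp
    finally show "Fpos pstar \<tau> b \<le> Fpos pstar \<tau> a + e" .
  qed
qed

lemma order_imp_Qcone:
  fixes pstar a b :: "real^('n::{finite,linorder})"
  assumes ps: "pstar \<in> pos_simplex" and ab: "(a,b) \<in> markov_order pstar"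
  shows "b - a \<in> Qcone a pstar"
proof -
  have pos: "\<forall>i. pstar$i > 0" using ps unfolding pos_simplex_def by auto
  have aS: "a \<in> pos_simplex" and bS: "b \<in> pos_simplex" and F: "\<And>\<tau>. Fpos pstar \<tau> b \<le> Fpos pstar \<tau> a"
    using order_imp_Fpos[OF ps ab] by auto
  define x where "x i = a$i / pstar$i" for i
  show ?thesis
  proof (rule farkas_Qcone)
    show "(\<Sum>k\<in>UNIV. (b - a)$k) = 0" using aS bS unfolding pos_simplex_def by (simp add: sum_subtractf)
  next
    fix U assume up: "\<forall>i j. i \<in> U \<longrightarrow> a$i / pstar$i < a$j / pstar$j \<longrightarrow> j \<in> U"
    show "(\<Sum>k\<in>U. (b - a)$k) \<le> 0"
    proof (cases "U = {}")
      case True then show ?thesis by simp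
    next
      case False
      define \<tau> where "\<tau> = Min (x ` U)"
      have fU: "finite U" by simp
      have ge: "a$i - \<tau> * pstar$i \<ge> 0" if "i \<in> U" for i
      proof -
        have "\<tau> \<le> x i" unfolding \<tau>_def using that fU by auto
        then show ?thesis unfolding x_def using pos[rule_format, of i] by (simp add: field_simps)
      qed
      have le: "a$i - \<tau> * pstar$i \<le> 0" if "i \<notin> U" for i
      proof -
        have "\<tau> \<in> x ` U" unfolding \<tau>_def using False fU by (intro Min_in) auto
        then obtain i0 where i0: "i0 \<in> U" "\<tau> = x i0" by auto
        have "\<not> x i0 < x i" using up i0(1) that unfolding x_def by blast
        then have "x i \<le> \<tau>" using i0 by simp
        then show ?thesis unfolding x_def using pos[rule_format, of i] by (simp add: field_simps)
      qed
      have Fa: "Fpos pstar \<tau> a = (\<Sum>k\<in>U. a$k - \<tau> * pstar$k)"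
      proof -
        have "Fpos pstar \<tau> a = (\<Sum>k\<in>UNIV. if k \<in> U then a$k - \<tau> * pstar$k else 0)"
          unfolding Fpos_def using ge le by (intro sum.cong) (auto simp: max_def intro: order_antisym)
        also have "\<dots> = (\<Sum>k\<in>U. a$k - \<tau> * pstar$k)" by (simp add: sum.If_cases)
        finally show ?thesis .
      qed
      have "(\<Sum>k\<in>U. b$k - \<tau> * pstar$k) \<le> (\<Sum>k\<in>U. max (b$k - \<tau> * pstar$k) 0)"
        by (intro sum_mono) simp
      also have "\<dots> \<le> Fpos pstar \<tau> b" unfolding Fpos_def by (intro sum_mono2) auto
      also have "\<dots> \<le> Fpos pstar \<tau> a" by (rule F)
      finally have "(\<Sum>k\<in>U. b$k - \<tau> * pstar$k) \<le> (\<Sum>k\<in>U. a$k - \<tau> * pstar$k)" using Fa by simp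
      then show ?thesis by (simp add: sum_subtractf)
    qed
  qed
qed



lemma sum_single:
  fixes f :: "'a \<Rightarrow> real"
  assumes "finite A" "j0 \<in> A" "\<And>j. j \<in> A \<Longrightarrow> j \<noteq> j0 \<Longrightarrow> f j = 0"
  shows "sum f A = f j0"
proof -
  have "sum f A = sum f {j0}" using assms by (intro sum.mono_neutral_right) auto
  then show ?thesis by simp
qed

lemma pre_in_order:
  assumes "a \<in> pos_simplex" "b \<in> pos_simplex" "markov_preorder pstar a b"
  shows "(a,b) \<in> markov_order pstar"
  using assms unfolding markov_order_def by blast

lemma order_trans':
  assumes "(a,b) \<in> markov_order pstar" "(b,c) \<in> markov_order pstar"
  shows "(a,c) \<in> markov_order pstar"
  unfolding markov_order_def
proof (rule InterI)
  fix R assume R: "R \<in> {R. R \<subseteq> pos_simplex \<times> pos_simplex \<and>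
          {(a,b). a \<in> pos_simplex \<and> b \<in> pos_simplex \<and> markov_preorder pstar a b} \<subseteq> R \<and>
          trans R \<and> closedin (top_of_set (pos_simplex \<times> pos_simplex)) R}"
  then have "(a,b) \<in> R" "(b,c) \<in> R" "trans R" using assms unfolding markov_order_def by blast+
  then show "(a,c) \<in> R" by (meson transD)
qed

lemma preorder_refl: "markov_preorder pstar p p"
proof -
  have rhs0: "kolmogorov_rhs (\<lambda>_ _. 0) p = 0" unfolding kolmogorov_rhs_def by (simp add: vec_eq_iff)
  show ?thesis unfolding markov_preorder_def
    by (rule exI[of _ "\<lambda>_ _. 0"], rule exI[of _ "\<lambda>_. p"])
       (simp add: markov_chain_def rhs0)
qed

lemma single_move:
  fixes pstar p :: "real^'n"
  assumes pos: "\<forall>i. pstar$i > 0" and uw: "u \<noteq> w" and d0: "\<delta> \<ge> 0"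
    and dlt: "\<delta> * (pstar$u + pstar$w) < pstar$w * p$u - pstar$u * p$w"
  shows "markov_preorder pstar p (p + \<delta> *\<^sub>R gamma_vec u w)"
proof -
  define y0 where "y0 = pstar$w * p$u - pstar$u * p$w"
  define \<sigma> where "\<sigma> = pstar$u + pstar$w"
  have \<sigma>: "\<sigma> > 0" unfolding \<sigma>_def using pos by (simp add: add_pos_pos)
  have y0: "y0 > 0" using dlt d0 \<sigma> unfolding y0_def \<sigma>_def by (smt (verit) mult_nonneg_nonneg)
  define D where "D = y0 / \<sigma>"
  have D: "D > 0" unfolding D_def using y0 \<sigma> by simp
  have dD: "\<delta> < D" unfolding D_def using dlt \<sigma> unfolding y0_def \<sigma>_def by (simp add: field_simps)
  define z where "z = 1 - \<delta> / D"
  have z: "0 < z" "z \<le> 1" unfolding z_def using dD D d0 by auto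
  define lam where "lam = - ln z"
  have l0: "lam \<ge> 0" unfolding lam_def using z by simp
  have el: "exp (- lam) = z" unfolding lam_def using z by simp
  define a where "a = lam / \<sigma>"
  have a0: "a \<ge> 0" unfolding a_def using l0 \<sigma> by simp
  have Dl: "D * lam = a * y0" unfolding D_def a_def using \<sigma> by simp
  define q where "q i j = (if i = w \<and> j = u then a * pstar$w else if i = u \<and> j = w then a * pstar$u else 0)" for i j
  define P where "P t = p + (D * (1 - exp (- lam * t))) *\<^sub>R gamma_vec u w" for t
  have gu: "gamma_vec u w $ u = -1" and gw: "gamma_vec u w $ w = 1"
    and go: "\<And>k. k \<noteq> u \<Longrightarrow> k \<noteq> w \<Longrightarrow> gamma_vec u w $ k = 0"
    unfolding gamma_vec_def using uw by auto
  have mc: "markov_chain pstar q"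
    unfolding markov_chain_def
  proof (intro conjI allI impI)
    fix i j :: 'n assume "i \<noteq> j"
    have "0 \<le> a * pstar$w" "0 \<le> a * pstar$u" using a0 pos[rule_format, of w] pos[rule_format, of u] by simp_all
    then show "0 \<le> q i j" unfolding q_def if_split by (intro conjI impI) (assumption, assumption, rule order_refl)
  next
    fix i :: 'n
    have qw: "q w j = (if j = u then a * pstar$w else 0)" for j using uw by (simp add: q_def)
    have qu: "q u j = (if j = w then a * pstar$u else 0)" for j using uw by (simp add: q_def)
    have qo: "i \<noteq> u \<Longrightarrow> i \<noteq> w \<Longrightarrow> q i j = 0 \<and> q j i = 0" for j by (simp add: q_def)
    have qjw: "q j w = (if j = u then a * pstar$u else 0)" for j using uw by (simp add: q_def)
    have qju: "q j u = (if j = w then a * pstar$w else 0)" for j using uw by (simp add: q_def)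
    show "(\<Sum>j\<in>-{i}. q i j * pstar$j) = (\<Sum>j\<in>-{i}. q j i) * pstar$i"
    proof (cases "i = w")
      case True
      have "(\<Sum>j\<in>-{i}. q i j * pstar$j) = q i u * pstar$u"
        by (rule sum_single) (use True uw in \<open>simp_all add: qw\<close>)
      moreover have "(\<Sum>j\<in>-{i}. q j i) = q u i"
        by (rule sum_single) (use True uw in \<open>simp_all add: qjw\<close>)
      ultimately show ?thesis using True uw by (simp add: qw qjw)
    next
      case False
      show ?thesis
      proof (cases "i = u")
        case True
        have "(\<Sum>j\<in>-{i}. q i j * pstar$j) = q i w * pstar$w"
          by (rule sum_single) (use True uw in \<open>simp_all add: qu\<close>)
        moreover have "(\<Sum>j\<in>-{i}. q j i) = q w i"
          by (rule sum_single) (use True uw in \<open>simp_all add: qju\<close>)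
        ultimately show ?thesis using True uw by (simp add: qu qju)
      next
        case False
        then show ?thesis using \<open>i \<noteq> w\<close> qo by simp
      qed
    qed
  qed
  have rhs: "kolmogorov_rhs q (P t) = (D * (lam * exp (- lam * t))) *\<^sub>R gamma_vec u w" for t
  proof -
    define m where "m = D * (1 - exp (- lam * t))"
    have Pu: "P t $ u = p$u - m" and Pw: "P t $ w = p$w + m" and Po: "\<And>k. k \<noteq> u \<Longrightarrow> k \<noteq> w \<Longrightarrow> P t $ k = p$k"
      unfolding P_def m_def using gu gw go by auto
    have key: "a * (pstar$w * P t $ u - pstar$u * P t $ w) = D * (lam * exp (- lam * t))"
    proof -
      have "pstar$w * P t $ u - pstar$u * P t $ w = y0 - m * \<sigma>"
        unfolding Pu Pw y0_def \<sigma>_def by (simp add: algebra_simps)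
      also have "\<dots> = y0 * exp (- lam * t)" unfolding m_def D_def using \<sigma> by (simp add: algebra_simps)
      finally show ?thesis using Dl by (simp add: algebra_simps)
    qed
    show ?thesis
    proof (subst vec_eq_iff, intro allI)
      fix k
      show "kolmogorov_rhs q (P t) $ k = ((D * (lam * exp (- lam * t))) *\<^sub>R gamma_vec u w) $ k"
      proof (cases "k = w")
        case True
        have "kolmogorov_rhs q (P t) $ k = q k u * P t $ u - q u k * P t $ k"
          unfolding kolmogorov_rhs_def by (simp, rule sum_single) (use True uw in \<open>auto simp: q_def\<close>)
        also have "\<dots> = a * (pstar$w * P t $ u - pstar$u * P t $ w)" using True uw by (simp add: q_def algebra_simps)
        finally show ?thesis using key True gw by simp
      next
        case False
        show ?thesis
        proof (cases "k = u")
          case True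
          have "kolmogorov_rhs q (P t) $ k = q k w * P t $ w - q w k * P t $ k"
            unfolding kolmogorov_rhs_def by (simp, rule sum_single) (use True uw in \<open>auto simp: q_def\<close>)
          also have "\<dots> = - (a * (pstar$w * P t $ u - pstar$u * P t $ w))" using True uw by (simp add: q_def algebra_simps)
          finally show ?thesis using key True gu by simp
        next
          case False
          have "kolmogorov_rhs q (P t) $ k = 0"
            unfolding kolmogorov_rhs_def using False \<open>k \<noteq> w\<close> by (simp add: q_def)
          then show ?thesis using False \<open>k \<noteq> w\<close> go by simp
        qed
      qed
    qed
  qed
  have der: "(P has_vector_derivative kolmogorov_rhs q (P t)) (at t within {0..1})" for t
  proof -
    have "((\<lambda>t. D * (1 - exp (- lam * t))) has_real_derivative D * (lam * exp (- lam * t))) (at t within {0..1})"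
      by (auto intro!: derivative_eq_intros)
    then have "((\<lambda>t. p + (D * (1 - exp (- lam * t))) *\<^sub>R gamma_vec u w) has_vector_derivative
        (0 + ((D * (1 - exp (- lam * t))) *\<^sub>R 0 + (D * (lam * exp (- lam * t))) *\<^sub>R gamma_vec u w))) (at t within {0..1})"
      by (intro has_vector_derivative_add has_vector_derivative_const has_vector_derivative_scaleR)
    then have "(P has_vector_derivative (D * (lam * exp (- lam * t))) *\<^sub>R gamma_vec u w) (at t within {0..1})"
      unfolding P_def by simp
    then show ?thesis using rhs[of t] by simp
  qed
  have P0: "P 0 = p" unfolding P_def by simp
  have P1: "P 1 = p + \<delta> *\<^sub>R gamma_vec u w"
  proof -
    have "D * (1 - exp (- lam * 1)) = \<delta>" using el D unfolding z_def by simp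
    then show ?thesis unfolding P_def by simp
  qed
  show ?thesis unfolding markov_preorder_def using mc P0 P1 der by blast
qed



lemma gamma_abs: "\<bar>gamma_vec j i $ k\<bar> \<le> 1"
  unfolding gamma_vec_def by auto

lemma gamma_sum: "j \<noteq> i \<Longrightarrow> (\<Sum>k\<in>UNIV. gamma_vec j i $ k) = 0"
proof -
  assume ji: "j \<noteq> i"
  have "(\<Sum>k\<in>UNIV. gamma_vec j i $ k) = (\<Sum>k\<in>UNIV. (if k = i then 1 else 0) - (if k = j then 1 else (0::real)))"
    unfolding gamma_vec_def using ji by (intro sum.cong) auto
  also have "\<dots> = 0" by (simp add: sum_subtractf)
  finally show ?thesis .
qed

lemma gamma_neg: "j \<noteq> i \<Longrightarrow> - gamma_vec j i = gamma_vec i j"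
  unfolding gamma_vec_def by (auto simp: vec_eq_iff)

lemma small_prod: "0 \<le> (a::real) \<Longrightarrow> a \<le> 1 \<Longrightarrow> \<bar>z\<bar> \<le> \<eta> \<Longrightarrow> a * z \<ge> - \<eta>"
proof -
  assume h: "0 \<le> a" "a \<le> 1" "\<bar>z\<bar> \<le> \<eta>"
  have "\<bar>a * z\<bar> \<le> \<bar>z\<bar>" using h by (simp add: abs_mult mult_left_le_one_le)
  then show ?thesis using h by linarith
qed

lemma move_cond:
  fixes pu pw p0u p0w zu zw \<delta> \<eta> :: real
  assumes "0 < pu" "pu \<le> 1" "0 < pw" "pw \<le> 1" "\<bar>zu\<bar> \<le> \<eta>" "\<bar>zw\<bar> \<le> \<eta>" "0 \<le> \<delta>" "\<delta> \<le> \<eta>"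
    "4 * \<eta> < pw * p0u - pu * p0w"
  shows "\<delta> * (pu + pw) < pw * (p0u + zu) - pu * (p0w + zw)"
proof -
  have a: "pw * zu \<ge> - \<eta>" using small_prod assms by simp
  have b: "pu * (- zw) \<ge> - \<eta>" using small_prod[of pu "- zw" \<eta>] assms by simp
  have c: "\<delta> * (pu + pw) \<le> \<eta> * 2"
  proof -
    have "\<delta> * (pu + pw) \<le> \<eta> * (pu + pw)" using assms by (intro mult_right_mono) auto
    also have "\<dots> \<le> \<eta> * 2" using assms by (intro mult_left_mono) auto
    finally show ?thesis .
  qed
  show ?thesis using a b c assms(9) by (simp add: algebra_simps)
qed

lemma cone_reach:
  fixes pstar p0 x :: "real^('n::{finite,linorder})"
  assumes ps: "pstar \<in> pos_simplex" and p0S: "p0 \<in> pos_simplex" and xQ: "x \<in> Qcone p0 pstar" and x0: "x \<noteq> 0"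
  shows "\<exists>\<epsilon>>0. p0 + \<epsilon> *\<^sub>R x \<in> pos_simplex \<and> (p0, p0 + \<epsilon> *\<^sub>R x) \<in> markov_order pstar"
proof -
  have pos: "\<forall>i. pstar$i > 0" and sum1: "(\<Sum>i\<in>UNIV. pstar$i) = 1" using ps unfolding pos_simplex_def by auto
  have p0pos: "\<forall>i. p0$i > 0" and p0sum: "(\<Sum>i\<in>UNIV. p0$i) = 1" using p0S unfolding pos_simplex_def by auto
  have ple1: "pstar$i \<le> 1" for i
  proof -
    have "pstar$i \<le> (\<Sum>i\<in>UNIV. pstar$i)" using pos by (intro member_le_sum) (auto intro: less_imp_le)
    then show ?thesis using sum1 by simp
  qed
  define x0 where "x0 k = p0$k / pstar$k" for k
  define Pr where "Pr = {(j::'n,i). j < i}"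
  obtain c where c: "\<forall>j i. c j i \<ge> 0" and xc: "x = (\<Sum>(j,i)\<in>{(j,i). j < i}.
               c j i *\<^sub>R (sgn (p0$j / pstar$j - p0$i / pstar$i) *\<^sub>R gamma_vec j i))"
    using xQ unfolding Qcone_def by blast
  define g where "g e = sgn (x0 (fst e) - x0 (snd e)) *\<^sub>R gamma_vec (fst e) (snd e)" for e
  define cc where "cc e = c (fst e) (snd e)" for e
  have xs: "x = (\<Sum>e\<in>Pr. cc e *\<^sub>R g e)" unfolding xc Pr_def
    by (simp add: case_prod_beta g_def cc_def x0_def)
  have ccnn: "cc e \<ge> 0" for e unfolding cc_def using c by simp
  define C where "C = sum cc Pr"
  have finPr: "finite Pr" by simp
  have C0: "C > 0"
  proof (rule ccontr)
    assume "\<not> C > 0"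
    then have "C = 0" using ccnn unfolding C_def by (metis less_eq_real_def sum_nonneg)
    then have "\<forall>e\<in>Pr. cc e = 0" unfolding C_def using ccnn finPr by (simp add: sum_nonneg_eq_0_iff)
    then have "x = 0" unfolding xs by simp
    then show False using x0 by simp
  qed
  have gabs: "\<bar>g e $ k\<bar> \<le> 1" for e k
  proof -
    have "\<bar>g e $ k\<bar> = \<bar>sgn (x0 (fst e) - x0 (snd e))\<bar> * \<bar>gamma_vec (fst e) (snd e) $ k\<bar>"
      unfolding g_def by (simp add: abs_mult)
    also have "\<dots> \<le> 1" using gamma_abs by (intro mult_le_one) (auto simp: abs_sgn_eq)
    finally show ?thesis .
  qed
  have gsum: "(\<Sum>k\<in>UNIV. g e $ k) = 0" if "e \<in> Pr" for e
  proof -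
    have ne: "fst e \<noteq> snd e" using that unfolding Pr_def by auto
    show ?thesis unfolding g_def using gamma_sum[OF ne] by (simp add: sum_distrib_left[symmetric])
  qed
  define rho where "rho = Min (range (\<lambda>k. p0$k))"
  have rho0: "rho > 0" unfolding rho_def using p0pos by (subst Min_gr_iff) auto
  have rhole: "rho \<le> p0$k" for k unfolding rho_def by simp
  define y where "y u w = pstar$w * p0$u - pstar$u * p0$w" for u w
  define A where "A = (\<lambda>(u,w). \<bar>y u w\<bar>) ` {(u,w). y u w \<noteq> 0}"
  define gp where "gp = Min (insert 1 A)"
  have finA: "finite A" unfolding A_def by simp
  have gp0: "gp > 0" unfolding gp_def using finA by (subst Min_gr_iff) (auto simp: A_def)
  have gple: "y u w \<noteq> 0 \<Longrightarrow> gp \<le> \<bar>y u w\<bar>" for u w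
    unfolding gp_def using finA by (intro Min_le) (auto simp: A_def)
  define \<eta> where "\<eta> = min (rho / 2) (gp / 8)"
  have eta0: "\<eta> > 0" unfolding \<eta>_def using rho0 gp0 by simp
  define \<epsilon> where "\<epsilon> = \<eta> / C"
  have eps0: "\<epsilon> > 0" unfolding \<epsilon>_def using eta0 C0 by simp
  have epsC: "\<epsilon> * C = \<eta>" unfolding \<epsilon>_def using C0 by simp
  define pt where "pt F = p0 + \<epsilon> *\<^sub>R (\<Sum>e\<in>F. cc e *\<^sub>R g e)" for F
  have bnd: "\<bar>pt F $ k - p0 $ k\<bar> \<le> \<eta>" if "F \<subseteq> Pr" for F k
  proof -
    have fF: "finite F" using that finPr finite_subset by blast
    have "\<bar>pt F $ k - p0 $ k\<bar> = \<epsilon> * \<bar>\<Sum>e\<in>F. cc e * g e $ k\<bar>"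
      unfolding pt_def using eps0 by (simp add: sum_component abs_mult)
    also have "\<dots> \<le> \<epsilon> * (\<Sum>e\<in>F. cc e)"
    proof (intro mult_left_mono)
      have "\<bar>\<Sum>e\<in>F. cc e * g e $ k\<bar> \<le> (\<Sum>e\<in>F. \<bar>cc e * g e $ k\<bar>)" by (rule sum_abs)
      also have "\<dots> \<le> (\<Sum>e\<in>F. cc e)"
      proof (intro sum_mono)
        fix e
        have "\<bar>cc e * g e $ k\<bar> = cc e * \<bar>g e $ k\<bar>" using ccnn by (simp add: abs_mult)
        also have "\<dots> \<le> cc e * 1" using ccnn gabs by (intro mult_left_mono) auto
        finally show "\<bar>cc e * g e $ k\<bar> \<le> cc e" by simp
      qed
      finally show "\<bar>\<Sum>e\<in>F. cc e * g e $ k\<bar> \<le> (\<Sum>e\<in>F. cc e)" .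
    qed (use eps0 in simp)
    also have "\<dots> \<le> \<epsilon> * C" unfolding C_def
      using eps0 ccnn that finPr by (intro mult_left_mono sum_mono2) auto
    finally show ?thesis using epsC by simp
  qed
  have ptS: "pt F \<in> pos_simplex" if "F \<subseteq> Pr" for F
  proof -
    have fF: "finite F" using that finPr finite_subset by blast
    have "pt F $ k > 0" for k
    proof -
      have "\<eta> \<le> rho / 2" unfolding \<eta>_def by simp
      then show ?thesis using bnd[OF that, of k] rhole[of k] rho0 by linarith
    qed
    moreover have "(\<Sum>k\<in>UNIV. pt F $ k) = 1"
    proof -
      have "(\<Sum>k\<in>UNIV. pt F $ k) = (\<Sum>k\<in>UNIV. p0 $ k) + \<epsilon> * (\<Sum>k\<in>UNIV. \<Sum>e\<in>F. cc e * g e $ k)"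
        unfolding pt_def by (simp add: sum_component sum.distrib sum_distrib_left)
      also have "(\<Sum>k\<in>UNIV. \<Sum>e\<in>F. cc e * g e $ k) = (\<Sum>e\<in>F. cc e * (\<Sum>k\<in>UNIV. g e $ k))"
        by (subst sum.swap) (simp add: sum_distrib_left)
      also have "\<dots> = 0" using gsum that by (intro sum.neutral) auto
      finally show ?thesis using p0sum by simp
    qed
    ultimately show ?thesis unfolding pos_simplex_def by auto
  qed
  have step: "markov_preorder pstar (pt F) (pt F + (\<epsilon> * cc e) *\<^sub>R g e)" if eP: "e \<in> Pr" and FP: "F \<subseteq> Pr" for e F
  proof -
    obtain j i where e: "e = (j,i)" and ji: "j < i" using eP unfolding Pr_def by auto
    have jne: "j \<noteq> i" using ji by simp
    define z where "z = pt F - p0"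
    have zb: "\<bar>z $ k\<bar> \<le> \<eta>" for k unfolding z_def using bnd[OF FP] by simp
    have ptz: "pt F $ k = p0 $ k + z $ k" for k unfolding z_def by simp
    have d0: "0 \<le> \<epsilon> * cc e" using eps0 ccnn by simp
    have dle: "\<epsilon> * cc e \<le> \<eta>"
    proof -
      have "cc e \<le> C" unfolding C_def using eP ccnn finPr by (intro member_le_sum) auto
      then have "\<epsilon> * cc e \<le> \<epsilon> * C" using eps0 by simp
      then show ?thesis using epsC by simp
    qed
    have eta_g: "4 * \<eta> < gp" unfolding \<eta>_def using gp0 by simp
    have pj: "0 < pstar$j" and pi: "0 < pstar$i" using pos by auto
    show ?thesis
    proof (cases "x0 j = x0 i")
      case True
      then have "g e = 0" unfolding g_def e by simp
      then show ?thesis using preorder_refl by simp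
    next
      case False
      show ?thesis
      proof (cases "x0 j > x0 i")
        case True
        then have ge: "g e = gamma_vec j i" unfolding g_def e by simp
        have ypos: "y j i > 0"
        proof -
          have "p0$i / pstar$i < p0$j / pstar$j" using True unfolding x0_def .
          then have "p0$i * pstar$j < p0$j * pstar$i" using pj pi by (simp add: divide_simps)
          then show ?thesis unfolding y_def by (simp add: algebra_simps)
        qed
        have "4 * \<eta> < y j i" using gple[of j i] ypos eta_g by simp
        then have cond: "(\<epsilon> * cc e) * (pstar$j + pstar$i) < pstar$i * pt F $ j - pstar$j * pt F $ i"
          unfolding ptz y_def using move_cond[OF pj ple1 pi ple1 zb zb d0 dle] by simp
        show ?thesis unfolding ge by (rule single_move[OF pos jne d0 cond])
      next
        case False
        then have lt: "x0 j < x0 i" using \<open>x0 j \<noteq> x0 i\<close> by simp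
        then have ge: "g e = gamma_vec i j" unfolding g_def e using gamma_neg[OF jne] by simp
        have ypos: "y i j > 0"
        proof -
          have "p0$j / pstar$j < p0$i / pstar$i" using lt unfolding x0_def .
          then have "p0$j * pstar$i < p0$i * pstar$j" using pj pi by (simp add: divide_simps)
          then show ?thesis unfolding y_def by (simp add: algebra_simps)
        qed
        have "4 * \<eta> < y i j" using gple[of i j] ypos eta_g by simp
        then have cond: "(\<epsilon> * cc e) * (pstar$i + pstar$j) < pstar$j * pt F $ i - pstar$i * pt F $ j"
          unfolding ptz y_def using move_cond[OF pi ple1 pj ple1 zb zb d0 dle] by simp
        show ?thesis unfolding ge by (rule single_move[OF pos jne[symmetric] d0 cond])
      qed
    qed
  qed
  have ind: "finite F \<Longrightarrow> F \<subseteq> Pr \<Longrightarrow> (p0, pt F) \<in> markov_order pstar" for F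
  proof (induction F rule: finite_induct)
    case empty
    have "pt {} = p0" unfolding pt_def by simp
    then show ?case using pre_in_order[OF p0S p0S preorder_refl] by simp
  next
    case (insert e F)
    have FP: "F \<subseteq> Pr" and eP: "e \<in> Pr" using insert.prems by auto
    have eq: "pt (insert e F) = pt F + (\<epsilon> * cc e) *\<^sub>R g e"
      unfolding pt_def using insert.hyps by (simp add: scaleR_add_right algebra_simps)
    have "(pt F, pt (insert e F)) \<in> markov_order pstar"
      using pre_in_order[OF ptS[OF FP] ptS[OF insert.prems]] step[OF eP FP] unfolding eq by blast
    then show ?case using order_trans'[OF insert.IH[OF FP]] by blast
  qed
  have "pt Pr = p0 + \<epsilon> *\<^sub>R x" unfolding pt_def xs ..
  then show ?thesis using ind[OF finPr order_refl] ptS[OF order_refl] eps0 by auto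
qed


theorem corollary1:
  fixes pstar p0 :: "real^('n::{finite,linorder})"
    and k :: nat and m :: "nat \<Rightarrow> real^('n::{finite,linorder})" and M :: "nat \<Rightarrow> real"
  assumes "CARD('n::{finite,linorder}) \<ge> 2"
    and "pstar \<in> pos_simplex"
    and "\<forall>j. m 0 $ j = 1" and "M 0 = 1"
    and "cond_manifold k m M \<inter> pos_simplex \<noteq> {}"
    and "p0 \<in> cond_manifold k m M \<inter> pos_simplex"
  shows "(\<not> (\<exists>p1 \<in> cond_manifold k m M \<inter> pos_simplex.
              p1 \<noteq> p0 \<and> (p0, p1) \<in> markov_order pstar))
         \<longleftrightarrow> ((\<lambda>x. p0 + x) ` Qcone p0 pstar) \<inter> cond_manifold k m M = {p0}"
proof
  assume nex: "\<not> (\<exists>p1 \<in> cond_manifold k m M \<inter> pos_simplex. p1 \<noteq> p0 \<and> (p0, p1) \<in> markov_order pstar)"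
  show "((\<lambda>x. p0 + x) ` Qcone p0 pstar) \<inter> cond_manifold k m M = {p0}"
  proof
    show "{p0} \<subseteq> ((\<lambda>x. p0 + x) ` Qcone p0 pstar) \<inter> cond_manifold k m M"
    proof -
      have "0 \<in> Qcone p0 pstar" using Qcone_convex_cone unfolding convex_cone_iff by blast
      then have "p0 \<in> (\<lambda>x. p0 + x) ` Qcone p0 pstar" by (metis add.right_neutral image_eqI)
      then show ?thesis using assms(6) by blast
    qed
    show "((\<lambda>x. p0 + x) ` Qcone p0 pstar) \<inter> cond_manifold k m M \<subseteq> {p0}"
    proof
      fix z assume z: "z \<in> ((\<lambda>x. p0 + x) ` Qcone p0 pstar) \<inter> cond_manifold k m M"
      then obtain x where xQ: "x \<in> Qcone p0 pstar" and zx: "z = p0 + x" and zL: "z \<in> cond_manifold k m M" by blast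
      show "z \<in> {p0}"
      proof (cases "x = 0")
        case True then show ?thesis using zx by simp
      next
        case False
        have p0S: "p0 \<in> pos_simplex" and p0L: "p0 \<in> cond_manifold k m M" using assms(6) by auto
        obtain \<epsilon> where eps: "\<epsilon> > 0" "p0 + \<epsilon> *\<^sub>R x \<in> pos_simplex" "(p0, p0 + \<epsilon> *\<^sub>R x) \<in> markov_order pstar"
          using cone_reach[OF assms(2) p0S xQ False] by blast
        have "p0 + \<epsilon> *\<^sub>R x \<in> cond_manifold k m M"
          unfolding cond_manifold_def
        proof (intro CollectI allI impI)
          fix r assume r: "r \<le> k"
          have a: "(\<Sum>j\<in>UNIV. m r $ j * p0 $ j) = M r" using p0L r unfolding cond_manifold_def by blast
          have b: "(\<Sum>j\<in>UNIV. m r $ j * z $ j) = M r" using zL r unfolding cond_manifold_def by blast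
          have "(\<Sum>j\<in>UNIV. m r $ j * z $ j) = (\<Sum>j\<in>UNIV. m r $ j * p0 $ j) + (\<Sum>j\<in>UNIV. m r $ j * x $ j)"
            unfolding zx by (simp add: distrib_left sum.distrib)
          then have c: "(\<Sum>j\<in>UNIV. m r $ j * x $ j) = 0" using a b by simp
          have "(\<Sum>j\<in>UNIV. m r $ j * (p0 + \<epsilon> *\<^sub>R x) $ j) = (\<Sum>j\<in>UNIV. m r $ j * p0 $ j) + \<epsilon> * (\<Sum>j\<in>UNIV. m r $ j * x $ j)"
            by (simp add: distrib_left sum.distrib sum_distrib_left algebra_simps)
          then show "(\<Sum>j\<in>UNIV. m r $ j * (p0 + \<epsilon> *\<^sub>R x) $ j) = M r" using a c by simp
        qed
        moreover have "p0 + \<epsilon> *\<^sub>R x \<noteq> p0" using eps(1) False by simp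
        ultimately show ?thesis using nex eps by blast
      qed
    qed
  qed
next
  assume eq: "((\<lambda>x. p0 + x) ` Qcone p0 pstar) \<inter> cond_manifold k m M = {p0}"
  show "\<not> (\<exists>p1 \<in> cond_manifold k m M \<inter> pos_simplex. p1 \<noteq> p0 \<and> (p0, p1) \<in> markov_order pstar)"
  proof
    assume "\<exists>p1 \<in> cond_manifold k m M \<inter> pos_simplex. p1 \<noteq> p0 \<and> (p0, p1) \<in> markov_order pstar"
    then obtain p1 where p1: "p1 \<in> cond_manifold k m M" "p1 \<noteq> p0" "(p0, p1) \<in> markov_order pstar" by blast
    have "p1 - p0 \<in> Qcone p0 pstar" by (rule order_imp_Qcone[OF assms(2) p1(3)])
    then have "p1 \<in> (\<lambda>x. p0 + x) ` Qcone p0 pstar" by (metis add.commute diff_add_cancel image_eqI)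
    then have "p1 \<in> {p0}" using eq p1(1) by blast
    then show False using p1(2) by simp
  qed
qed

end
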